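(* Let $\epsilon_\tau,\omega_1,\omega_2\in(0,1)$, $\tau_{\mathrm{prev}}>0$, $c\in\mathbb{R}^m$, and set $a:=(1-\epsilon_\tau)(1-\omega_1)(1-\omega_2)\|c\|_1$. For a real number $h$ define the update $T(h):=\tau_{\mathrm{prev}}$ if $\|c\|_1=0$ or $h\le a/\tau_{\mathrm{prev}}$, and $T(h):=a/h$ otherwise. Let $\theta_3>0$, $\beta\in(0,1)$, $\sigma\in[2,4]$ with $\theta_3\beta^{\sigma/2}\le\tfrac12$, and let $h,\bar h\in\mathbb{R}$ satisfy $|\bar h-h|\le\theta_3\beta^{\sigma/2}|h|$. Then $|T(\bar h)-T(h)|\le2\theta_3\beta^{\sigma/2}\tau_{\mathrm{prev}}$. Consequently, if $\tau_{\mathrm{prev}}\le\tau_{\max}$, $g,d\in\mathbb{R}^n$ and $D\ge0$ satisfy $|g^Td|\le\kappa_{gd,\Delta l}D$, then $$|(T(\bar h)-T(h))\,g^Td|\le 2\theta_3\tau_{\max}\kappa_{gd,\Delta l}\,\beta^{\sigma/2}D.$$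
   Context: In the paper, $h=g^Td+\max\{d^THd,\epsilon_d\|d\|_2^2\}$ (deterministic quantities), $\bar h=\bar g^T\bar d+\max\{\bar d^TH\bar d,\epsilon_d\|\bar d\|_2^2\}$ (stochastic quantities), $T(\bar h)$ and $T(h)$ are the stochastic and deterministic merit parameters obtained from the previous value $\tau_{\mathrm{prev}}$, and $D=\Delta l(\tau,g,d)$. *)

theory Defs
  imports "HOL-Analysis.Analysis"
begin

definition norm1 :: "real ^ 'm \<Rightarrow> real" where
  "norm1 c = (\<Sum>i\<in>UNIV. \<bar>c $ i\<bar>)"

definition merit_update ::
  "real \<Rightarrow> real \<Rightarrow> real \<Rightarrow> real \<Rightarrow> real ^ 'm \<Rightarrow> real \<Rightarrow> real" where
  "merit_update eps_tau om1 om2 tau_prev c h =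
     (let a = (1 - eps_tau) * (1 - om1) * (1 - om2) * norm1 c in
      if norm1 c = 0 \<or> h \<le> a / tau_prev then tau_prev else a / h)"

end

theory Submission
  imports Defs
begin

lemma core:
  fixes a t e h hb :: real
  assumes a: "0 < a" and t: "0 < t" and e: "0 \<le> e" "e \<le> 1/2"
    and hh: "\<bar>hb - h\<bar> \<le> e * \<bar>h\<bar>"
  shows "\<bar>(if hb \<le> a / t then t else a / hb) - (if h \<le> a / t then t else a / h)\<bar> \<le> e * t"
proof -
  have s: "0 < a / t" using a t by simp
  show ?thesis
  proof (cases "hb \<le> a/t")
    case hb1: True
    show ?thesis
    proof (cases "h \<le> a/t")
      case True with hb1 e t show ?thesis by simp
    next
      case False
      hence hp: "h > 0" using s by linarith
      have "h - hb \<le> e * h" using hh hp by auto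
      have "t - a/h = t * (h - a/t) / h" using hp t by (simp add: field_simps)
      also have "\<dots> \<le> t * (e*h) / h"
        using hp t hb1 \<open>h - hb \<le> e*h\<close> by (intro divide_right_mono mult_left_mono) auto
      also have "\<dots> = e * t" using hp by simp
      finally have "t - a/h \<le> e*t" .
      moreover have "a/h < t" using False hp t by (simp add: field_simps)
      ultimately show ?thesis using hb1 False by simp
    qed
  next
    case hb1: False
    hence hbp: "hb > 0" using s by linarith
    have hp: "h > 0"
    proof (rule ccontr)
      assume "\<not> h > 0"
      hence "\<bar>h\<bar> = -h" by simp
      with hh have "hb - h \<le> - e*h" by auto
      hence "hb \<le> (1 - e) * h" by (simp add: algebra_simps)
      moreover have "(1-e)*h \<le> 0" using \<open>\<not> h>0\<close> e by (simp add: mult_nonneg_nonpos)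
      ultimately show False using hbp by linarith
    qed
    have d1: "hb - h \<le> e*h" and d2: "h - hb \<le> e*h" using hh hp by auto
    have abt: "a/hb < t" using hb1 hbp t by (simp add: field_simps)
    show ?thesis
    proof (cases "h \<le> a/t")
      case True
      have "t - a/hb = t * (hb - a/t) / hb" using hbp t by (simp add: field_simps)
      also have "\<dots> \<le> t * (e*h) / hb"
        using hbp t True d1 by (intro divide_right_mono mult_left_mono) auto
      also have "\<dots> \<le> t * (e*hb) / hb"
        using hbp t True hb1 e by (intro divide_right_mono mult_left_mono) auto
      also have "\<dots> = e * t" using hbp by simp
      finally show ?thesis using True hb1 abt by simp
    next
      case False
      have aht: "a/h < t" using False hp t by (simp add: field_simps)
      have "a/hb - a/h = a * (h - hb) / (h*hb)" using hp hbp by (simp add: field_simps)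
      hence "\<bar>a/hb - a/h\<bar> = a * \<bar>h - hb\<bar> / (h*hb)" using a hp hbp by (simp add: abs_mult)
      also have "\<dots> \<le> a * (e*h) / (h*hb)"
        using hh hp hbp a by (intro divide_right_mono mult_left_mono) (auto simp: abs_minus_commute)
      also have "\<dots> = e * (a/hb)" using hp by simp
      also have "\<dots> \<le> e * t" using abt e by (intro mult_left_mono) auto
      finally show ?thesis using False hb1 by simp
    qed
  qed
qed

theorem lemma4p13:
  fixes eps_tau om1 om2 tau_prev theta3 beta sigma h hbar :: real
    and c :: "real ^ 'm"
    and tau_max kappa D :: real
    and g d :: "real ^ 'n"
  assumes "0 < eps_tau" "eps_tau < 1" "0 < om1" "om1 < 1" "0 < om2" "om2 < 1"
    and "0 < tau_prev"
    and "0 < theta3" "0 < beta" "beta < 1" "2 \<le> sigma" "sigma \<le> 4"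
    and "theta3 * beta powr (sigma / 2) \<le> 1 / 2"
    and "\<bar>hbar - h\<bar> \<le> theta3 * beta powr (sigma / 2) * \<bar>h\<bar>"
  shows "\<bar>merit_update eps_tau om1 om2 tau_prev c hbar - merit_update eps_tau om1 om2 tau_prev c h\<bar>
           \<le> 2 * theta3 * beta powr (sigma / 2) * tau_prev
         \<and> ((tau_prev \<le> tau_max \<and> 0 \<le> D \<and> \<bar>g \<bullet> d\<bar> \<le> kappa * D) \<longrightarrow>
            \<bar>(merit_update eps_tau om1 om2 tau_prev c hbar - merit_update eps_tau om1 om2 tau_prev c h) * (g \<bullet> d)\<bar>
              \<le> 2 * theta3 * tau_max * kappa * beta powr (sigma / 2) * D)"
proof -
  define e where "e = theta3 * beta powr (sigma / 2)"
  define a where "a = (1 - eps_tau) * (1 - om1) * (1 - om2) * norm1 c"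
  let ?T = "merit_update eps_tau om1 om2 tau_prev c"
  have e0: "0 \<le> e" unfolding e_def using assms by simp
  have n0: "0 \<le> norm1 c" unfolding norm1_def by (simp add: sum_nonneg)
  have main: "\<bar>?T hbar - ?T h\<bar> \<le> e * tau_prev"
  proof (cases "norm1 c = 0")
    case True
    thus ?thesis using e0 assms(7) by (simp add: merit_update_def)
  next
    case False
    hence ap: "0 < a" unfolding a_def using n0 assms by simp
    have "\<bar>(if hbar \<le> a / tau_prev then tau_prev else a / hbar) -
           (if h \<le> a / tau_prev then tau_prev else a / h)\<bar> \<le> e * tau_prev"
      by (rule core[OF ap assms(7) e0]) (use assms in \<open>auto simp: e_def\<close>)
    moreover have "?T x = (if x \<le> a / tau_prev then tau_prev else a / x)" for x
      using False by (simp add: merit_update_def a_def[symmetric] Let_def)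
    ultimately show ?thesis by simp
  qed
  have "0 \<le> e * tau_prev" using e0 assms(7) by simp
  hence 1: "\<bar>?T hbar - ?T h\<bar> \<le> 2 * e * tau_prev" using main by linarith
  have 2: "\<bar>(?T hbar - ?T h) * (g \<bullet> d)\<bar> \<le> 2 * theta3 * tau_max * kappa * beta powr (sigma / 2) * D"
    if H: "tau_prev \<le> tau_max" "0 \<le> D" "\<bar>g \<bullet> d\<bar> \<le> kappa * D"
  proof -
    have "2 * e * tau_prev \<le> 2 * e * tau_max" using H e0 by (simp add: mult_left_mono)
    hence hT: "\<bar>?T hbar - ?T h\<bar> \<le> 2 * e * tau_max" using 1 by linarith
    have "\<bar>(?T hbar - ?T h) * (g \<bullet> d)\<bar> = \<bar>?T hbar - ?T h\<bar> * \<bar>g \<bullet> d\<bar>" by (simp add: abs_mult)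
    also have "\<dots> \<le> (2 * e * tau_max) * (kappa * D)"
      using hT H e0 by (intro mult_mono) auto
    also have "\<dots> = 2 * theta3 * tau_max * kappa * beta powr (sigma / 2) * D"
      by (simp add: e_def)
    finally show ?thesis .
  qed
  show ?thesis using 1 2 by (simp add: e_def mult.assoc)
qed

end
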